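(* Let $Q$ be a compact metric space, $p_0:Q\to[0,+\infty]$ a function which is not identically $+\infty$, $c:Q\times Q\to[0,+\infty)$ continuous with $c(x,x)=0$ for all $x$, and $f$ a nonnegative Radon measure on $Q$. Let $\mathcal A=\{p:Q\to\overline{\mathbb{R}}\ :\ p\le p_0 \text{ on } Q,\ p \text{ lower semicontinuous on } Q\}$. Then the problem $\max\{F(p)\ :\ p\in\mathcal A\}$ admits a solution $p_{opt}$, where $$F(p)=\int_Q\Big(\max_{y\in T_p(x)}p(y)\Big)\,df(x).$$
   Context: For $p\in\mathcal A$ and $x\in Q$: $v_p(x)=\min_{y\in Q}\{c(x,y)+p(y)\}$ and $T_p(x)=\{y\in Q\ :\ c(x,y)+p(y)=v_p(x)\}$ (the set of locations where a customer living at $x$ optimally buys). The integrand $\max_{y\in T_p(x)}p(y)$ corresponds to the tie-breaking rule that a customer at $x$ chooses, among optimal locations, one maximizing price (equivalently minimizing $c(x,\cdot)$ on $T_p(x)$). *)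

theory Defs
  imports "HOL-Analysis.Analysis"
begin

definition lsc_on :: "'a::metric_space set \<Rightarrow> ('a \<Rightarrow> ereal) \<Rightarrow> bool" where
  "lsc_on Q p \<longleftrightarrow> (\<forall>x\<in>Q. \<forall>t. t < p x \<longrightarrow>
      (\<exists>e>0. \<forall>y\<in>Q. dist y x < e \<longrightarrow> t < p y))"

definition admissible :: "'a::metric_space set \<Rightarrow> ('a \<Rightarrow> ereal) \<Rightarrow> ('a \<Rightarrow> ereal) set" where
  "admissible Q p0 = {p. (\<forall>x\<in>Q. p x \<le> p0 x) \<and> lsc_on Q p}"

text \<open>v_p(x) = min over y in Q of c(x,y)+p(y) (the minimum is attained; written as Inf).\<close>
definition vfun :: "'a set \<Rightarrow> ('a \<Rightarrow> 'a \<Rightarrow> real) \<Rightarrow> ('a \<Rightarrow> ereal) \<Rightarrow> 'a \<Rightarrow> ereal" where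
  "vfun Q c p x = (INF y\<in>Q. ereal (c x y) + p y)"

definition Tset :: "'a set \<Rightarrow> ('a \<Rightarrow> 'a \<Rightarrow> real) \<Rightarrow> ('a \<Rightarrow> ereal) \<Rightarrow> 'a \<Rightarrow> 'a set" where
  "Tset Q c p x = {y\<in>Q. ereal (c x y) + p y = vfun Q c p x}"

definition ereal_integral :: "'a measure \<Rightarrow> ('a \<Rightarrow> ereal) \<Rightarrow> ereal" where
  "ereal_integral M g =
     enn2ereal (\<integral>\<^sup>+ x. e2ennreal (g x) \<partial>M) - enn2ereal (\<integral>\<^sup>+ x. e2ennreal (- g x) \<partial>M)"

text \<open>F(p) = integral over Q of max_{y in T_p(x)} p(y) df(x) (max attained; written as Sup).\<close>
definition Ffun :: "'a set \<Rightarrow> ('a \<Rightarrow> 'a \<Rightarrow> real) \<Rightarrow> 'a measure \<Rightarrow> ('a \<Rightarrow> ereal) \<Rightarrow> ereal" where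
  "Ffun Q c f p = ereal_integral f (\<lambda>x. SUP y\<in>Tset Q c p x. p y)"

end

theory Submission
  imports Defs "HOL-Complex_Analysis.Great_Picard"
begin

locale mk =
  fixes Q :: "'a::metric_space set" and c :: "'a \<Rightarrow> 'a \<Rightarrow> real"
  assumes cQ: "compact Q" and ne: "Q \<noteq> {}"
    and cont: "continuous_on (Q \<times> Q) (\<lambda>(x, y). c x y)"
    and cnn: "\<forall>x\<in>Q. \<forall>y\<in>Q. 0 \<le> c x y" and cdiag: "\<forall>x\<in>Q. c x x = 0"
begin

definition Lq :: "('a \<Rightarrow> real) \<Rightarrow> bool" where
  "Lq q \<longleftrightarrow> (\<forall>e>0. \<forall>y\<in>Q. \<forall>y'\<in>Q. (\<forall>x\<in>Q. \<bar>c x y - c x y'\<bar> < e) \<longrightarrow> \<bar>q y - q y'\<bar> \<le> e)"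

lemma UCc:
  assumes e: "e > 0"
  shows "\<exists>d>0. \<forall>x\<in>Q. \<forall>y\<in>Q. \<forall>y'\<in>Q. dist y y' < d \<longrightarrow> \<bar>c x y - c x y'\<bar> < e"
proof -
  have "uniformly_continuous_on (Q\<times>Q) (\<lambda>(x,y). c x y)"
    by (rule compact_uniformly_continuous[OF cont]) (simp add: compact_Times cQ)
  then obtain d where d0: "d>0" and d: "\<forall>a\<in>Q\<times>Q. \<forall>b\<in>Q\<times>Q. dist b a < d \<longrightarrow> dist ((\<lambda>(x,y). c x y) b) ((\<lambda>(x,y). c x y) a) < e"
    unfolding uniformly_continuous_on_def using e by metis
  show ?thesis
  proof (intro exI[of _ d] conjI ballI impI)
    fix x y y' assume xy: "x \<in> Q" "y \<in> Q" "y' \<in> Q" and "dist y y' < d"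
    then have "dist (x,y) (x,y') < d" by (simp add: dist_Pair_Pair)
    with d xy show "\<bar>c x y - c x y'\<bar> < e" by (fastforce simp: dist_real_def)
  qed (fact d0)
qed

lemma EQ:
  assumes e: "e > 0"
  shows "\<exists>d>0. \<forall>q. Lq q \<longrightarrow> (\<forall>y\<in>Q. \<forall>y'\<in>Q. dist y y' < d \<longrightarrow> \<bar>q y - q y'\<bar> \<le> e)"
proof -
  obtain d where "d > 0" and d: "\<forall>x\<in>Q. \<forall>y\<in>Q. \<forall>y'\<in>Q. dist y y' < d \<longrightarrow> \<bar>c x y - c x y'\<bar> < e"
    using UCc[OF e] by blast
  then show ?thesis using e unfolding Lq_def by (metis)
qed

lemma Lq_cont:
  assumes "Lq q" shows "continuous_on Q q"
  unfolding continuous_on_iff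
proof (intro ballI allI impI)
  fix x e assume x: "x \<in> Q" and e: "(0::real) < e"
  obtain d where "d > 0" and d: "\<forall>q. Lq q \<longrightarrow> (\<forall>y\<in>Q. \<forall>y'\<in>Q. dist y y' < d \<longrightarrow> \<bar>q y - q y'\<bar> \<le> e/2)"
    using EQ[of "e/2"] e by auto
  show "\<exists>d>0. \<forall>x'\<in>Q. dist x' x < d \<longrightarrow> dist (q x') (q x) < e"
    using d assms x e \<open>d>0\<close> by (force simp: dist_real_def)
qed

lemma dense_countable:
  obtains R where "countable R" "R \<subseteq> Q" "\<And>x d. x \<in> Q \<Longrightarrow> d > 0 \<Longrightarrow> \<exists>r\<in>R. dist x r < d"
proof -
  have "\<exists>T. T \<subseteq> Q \<and> finite T \<and> Q \<subseteq> (\<Union>t\<in>T. ball t (inverse (real (Suc n))))" for n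
  proof (rule compactE_image[OF cQ, of Q "\<lambda>t. ball t (inverse (real (Suc n)))"])
    show "Q \<subseteq> (\<Union>t\<in>Q. ball t (inverse (real (Suc n))))"
      by (auto intro!: bexI)
  qed auto
  then obtain TT where TT: "\<And>n. TT n \<subseteq> Q \<and> finite (TT n) \<and> Q \<subseteq> (\<Union>t\<in>TT n. ball t (inverse (real (Suc n))))"
    by metis
  show ?thesis
  proof (rule that[of "\<Union>n. TT n"])
    show "countable (\<Union>n. TT n)" using TT by (auto intro: countable_finite)
    show "(\<Union>n. TT n) \<subseteq> Q" using TT by auto
    fix x d assume x: "x \<in> Q" and d: "(0::real) < d"
    obtain n where n: "inverse (real (Suc n)) < d" using reals_Archimedean d by blast
    then obtain t where "t \<in> TT n" "dist t x < inverse (real (Suc n))" using TT[of n] x by auto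
    then show "\<exists>r\<in>(\<Union>n. TT n). dist x r < d" using n by (metis UN_I UNIV_I dist_commute less_trans)
  qed
qed

lemma AA:
  assumes L: "\<And>n. Lq (qs n)" and B: "\<And>n y. y \<in> Q \<Longrightarrow> \<bar>qs n y\<bar> \<le> B"
  obtains k where "strict_mono (k::nat\<Rightarrow>nat)" "\<And>y. y \<in> Q \<Longrightarrow> convergent (\<lambda>n. qs (k n) y)"
proof -
  obtain R where R: "countable R" "R \<subseteq> Q" and dense: "\<And>x d. x \<in> Q \<Longrightarrow> d > 0 \<Longrightarrow> \<exists>r\<in>R. dist x r < d"
    using dense_countable by blast
  obtain k where k: "strict_mono (k::nat\<Rightarrow>nat)" and kc: "\<And>x. x \<in> R \<Longrightarrow> \<exists>l. (\<lambda>n. qs (k n) x) \<longlonglongrightarrow> l"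
    using function_convergent_subsequence[OF R(1), of qs B] B R(2) by (auto simp: subset_iff)
  show thesis
  proof (rule that[OF k])
    fix y assume y: "y \<in> Q"
    have "Cauchy (\<lambda>n. qs (k n) y)"
      unfolding Cauchy_def
    proof (intro allI impI)
      fix e :: real assume e: "e > 0"
      obtain d where "d > 0" and d: "\<forall>q. Lq q \<longrightarrow> (\<forall>y\<in>Q. \<forall>y'\<in>Q. dist y y' < d \<longrightarrow> \<bar>q y - q y'\<bar> \<le> e/4)"
        using EQ[of "e/4"] e by auto
      obtain r where r: "r \<in> R" "dist y r < d" using dense[OF y \<open>d>0\<close>] by blast
      have "Cauchy (\<lambda>n. qs (k n) r)" using kc[OF r(1)] LIMSEQ_imp_Cauchy by blast
      then obtain M where M: "\<forall>m\<ge>M. \<forall>n\<ge>M. dist (qs (k m) r) (qs (k n) r) < e/4"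
        using e unfolding Cauchy_def by (meson divide_pos_pos zero_less_numeral)
      have rQ: "r \<in> Q" using r R by auto
      show "\<exists>M. \<forall>m\<ge>M. \<forall>n\<ge>M. dist (qs (k m) y) (qs (k n) y) < e"
      proof (intro exI[of _ M] allI impI)
        fix m n assume mn: "M \<le> m" "M \<le> n"
        have 1: "\<bar>qs (k m) y - qs (k m) r\<bar> \<le> e/4" using d L y rQ r by blast
        have 2: "\<bar>qs (k n) y - qs (k n) r\<bar> \<le> e/4" using d L y rQ r by blast
        have 3: "\<bar>qs (k m) r - qs (k n) r\<bar> < e/4" using M mn by (simp add: dist_real_def)
        show "dist (qs (k m) y) (qs (k n) y) < e" using 1 2 3 e unfolding dist_real_def abs_le_iff abs_less_iff by linarith
      qed
    qed
    then show "convergent (\<lambda>n. qs (k n) y)" by (simp add: Cauchy_convergent_iff)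
  qed
qed

end

context mk begin

definition Tr :: "('a \<Rightarrow> real) \<Rightarrow> 'a \<Rightarrow> 'a set" where
  "Tr q x = {y\<in>Q. \<forall>z\<in>Q. c x y + q y \<le> c x z + q z}"
definition Ge :: "('a \<Rightarrow> real) \<Rightarrow> 'a \<Rightarrow> ereal" where
  "Ge q x = (SUP y\<in>Tr q x. ereal (q y))"
definition Gr :: "('a \<Rightarrow> real) \<Rightarrow> 'a \<Rightarrow> real" where
  "Gr q x = real_of_ereal (Ge q x)"

lemma conv_diag:
  assumes L: "\<And>n. Lq (qs n)" and qc: "(\<lambda>n. qs n y) \<longlonglongrightarrow> q y"
    and ys: "\<And>n. ys n \<in> Q" "ys \<longlonglongrightarrow> y" "y \<in> Q"
  shows "(\<lambda>n. qs n (ys n)) \<longlonglongrightarrow> q y"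
  unfolding tendsto_iff
proof (intro allI impI)
  fix e :: real assume e: "e > 0"
  obtain d where "d > 0" and d: "\<forall>q. Lq q \<longrightarrow> (\<forall>y\<in>Q. \<forall>y'\<in>Q. dist y y' < d \<longrightarrow> \<bar>q y - q y'\<bar> \<le> e/2)"
    using EQ[of "e/2"] e by auto
  have 1: "\<forall>\<^sub>F n in sequentially. dist (ys n) y < d" using ys(2) \<open>d>0\<close> unfolding tendsto_iff by blast
  have e2: "e/2 > 0" using e by simp
  have 2: "\<forall>\<^sub>F n in sequentially. dist (qs n y) (q y) < e/2" using qc e2 unfolding tendsto_iff by blast
  show "\<forall>\<^sub>F n in sequentially. dist (qs n (ys n)) (q y) < e"
    using 1 2
  proof eventually_elim
    case (elim n)
    have "\<bar>qs n (ys n) - qs n y\<bar> \<le> e/2" using d L ys elim(1) by blast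
    then show ?case using elim(2) unfolding dist_real_def abs_le_iff abs_less_iff by linarith
  qed
qed

lemma c_tendsto:
  assumes "\<And>n. xs n \<in> Q" "xs \<longlonglongrightarrow> x" "x \<in> Q" "\<And>n. ys n \<in> Q" "ys \<longlonglongrightarrow> y" "y \<in> Q"
  shows "(\<lambda>n. c (xs n) (ys n)) \<longlonglongrightarrow> c x y"
proof -
  have "(\<lambda>n. (\<lambda>(x,y). c x y) (xs n, ys n)) \<longlonglongrightarrow> (\<lambda>(x,y). c x y) (x, y)"
  proof (rule continuous_on_tendsto_compose[OF cont])
    show "(\<lambda>n. (xs n, ys n)) \<longlonglongrightarrow> (x, y)" by (rule tendsto_Pair[OF assms(2) assms(5)])
    show "(x, y) \<in> Q \<times> Q" using assms(3,6) by simp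
    show "\<forall>\<^sub>F n in sequentially. (xs n, ys n) \<in> Q \<times> Q" using assms(1,4) by simp
  qed
  then show ?thesis by simp
qed

lemma key:
  assumes L: "\<And>n. Lq (qs n)" and qc: "\<And>z. z\<in>Q \<Longrightarrow> (\<lambda>n. qs n z) \<longlonglongrightarrow> q z"
    and xs: "\<And>n. xs n \<in> Q" "xs \<longlonglongrightarrow> x" "x \<in> Q" and ys: "\<And>n. ys n \<in> Q"
    and opt: "\<And>n z. z \<in> Q \<Longrightarrow> c (xs n) (ys n) + qs n (ys n) \<le> c (xs n) z + qs n z"
    and a: "\<And>n. a - e n \<le> qs n (ys n)" and e: "e \<longlonglongrightarrow> 0"
  shows "\<exists>y\<in>Q. (\<forall>z\<in>Q. c x y + q y \<le> c x z + q z) \<and> a \<le> q y"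
proof -
  obtain y r where y: "y \<in> Q" and r: "strict_mono (r::nat\<Rightarrow>nat)" and yr: "(ys \<circ> r) \<longlonglongrightarrow> y"
  proof -
    have "\<exists>l\<in>Q. \<exists>r::nat\<Rightarrow>nat. strict_mono r \<and> (ys \<circ> r) \<longlonglongrightarrow> l"
      by (rule cQ[unfolded compact_def, rule_format, OF ys])
    then show ?thesis using that by blast
  qed
  have qcr: "(\<lambda>n. qs (r n) z) \<longlonglongrightarrow> q z" if "z \<in> Q" for z
    using LIMSEQ_subseq_LIMSEQ[OF qc[OF that] r] by (simp add: o_def)
  have yr': "(\<lambda>n. ys (r n)) \<longlonglongrightarrow> y" using yr by (simp add: o_def)
  have xr: "(\<lambda>n. xs (r n)) \<longlonglongrightarrow> x" using LIMSEQ_subseq_LIMSEQ[OF xs(2) r] by (simp add: o_def)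
  have Q1: "(\<lambda>n. qs (r n) (ys (r n))) \<longlonglongrightarrow> q y"
    by (rule conv_diag[where qs="\<lambda>n. qs (r n)" and ys="\<lambda>n. ys (r n)" and q=q and y=y, OF L qcr[OF y] ys yr' y])
  have C1: "(\<lambda>n. c (xs (r n)) (ys (r n))) \<longlonglongrightarrow> c x y"
    by (rule c_tendsto[where xs="\<lambda>n. xs (r n)" and ys="\<lambda>n. ys (r n)" and x=x and y=y, OF xs(1) xr xs(3) ys yr' y])
  show ?thesis
  proof (intro bexI[OF _ y] conjI ballI)
    fix z assume z: "z \<in> Q"
    have C2: "(\<lambda>n. c (xs (r n)) z) \<longlonglongrightarrow> c x z"
      by (rule c_tendsto[where xs="\<lambda>n. xs (r n)" and ys="\<lambda>n. z" and x=x and y=z, OF xs(1) xr xs(3) z tendsto_const z])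
    show "c x y + q y \<le> c x z + q z"
      by (rule tendsto_le[OF trivial_limit_sequentially tendsto_add[OF C2 qcr[OF z]] tendsto_add[OF C1 Q1]])
         (simp add: opt z)
  next
    have er: "(\<lambda>n. e (r n)) \<longlonglongrightarrow> 0"
      using LIMSEQ_subseq_LIMSEQ[OF e r] by (simp add: o_def)
    have A: "(\<lambda>n. a - e (r n)) \<longlonglongrightarrow> a - 0"
      by (rule tendsto_diff[OF tendsto_const er])
    have "a - 0 \<le> q y"
      by (rule tendsto_le[OF trivial_limit_sequentially Q1 A]) (simp add: a)
    then show "a \<le> q y" by simp
  qed
qed
lemma Tset_eq: "Tset Q c (\<lambda>y. ereal (q y)) x = Tr q x"
proof -
  have "ereal (c x y) + ereal (q y) = vfun Q c (\<lambda>y. ereal (q y)) x \<longleftrightarrow> (\<forall>z\<in>Q. c x y + q y \<le> c x z + q z)"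
    if "y \<in> Q" for y
  proof
    assume h: "ereal (c x y) + ereal (q y) = vfun Q c (\<lambda>y. ereal (q y)) x"
    show "\<forall>z\<in>Q. c x y + q y \<le> c x z + q z"
    proof
      fix z assume "z \<in> Q"
      then have "vfun Q c (\<lambda>y. ereal (q y)) x \<le> ereal (c x z) + ereal (q z)"
        unfolding vfun_def by (rule INF_lower)
      then have "ereal (c x y + q y) \<le> ereal (c x z + q z)" using h by simp
      then show "c x y + q y \<le> c x z + q z" by simp
    qed
  next
    assume h: "\<forall>z\<in>Q. c x y + q y \<le> c x z + q z"
    have "vfun Q c (\<lambda>y. ereal (q y)) x \<le> ereal (c x y) + ereal (q y)"
      unfolding vfun_def using that by (rule INF_lower)
    moreover have "ereal (c x y) + ereal (q y) \<le> vfun Q c (\<lambda>y. ereal (q y)) x"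
      unfolding vfun_def using h by (auto intro!: INF_greatest)
    ultimately show "ereal (c x y) + ereal (q y) = vfun Q c (\<lambda>y. ereal (q y)) x" by simp
  qed
  then show ?thesis unfolding Tset_def Tr_def by auto
qed

lemma Tr_ne:
  assumes x: "x \<in> Q" and L: "Lq q" shows "Tr q x \<noteq> {}"
proof -
  have "continuous_on Q (\<lambda>y. (\<lambda>(x,y). c x y) (x, y))"
    by (rule continuous_on_compose2[OF cont]) (auto intro!: continuous_intros simp: x)
  then have "continuous_on Q (\<lambda>y. c x y + q y)"
    by (auto intro!: continuous_on_add Lq_cont[OF L])
  then obtain y where "y \<in> Q" "\<forall>z\<in>Q. c x y + q y \<le> c x z + q z"
    using continuous_attains_inf[OF cQ ne] by blast
  then show ?thesis unfolding Tr_def by auto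
qed

lemma Ge_bounds:
  assumes x: "x \<in> Q" and L: "Lq q" and B: "\<And>y. y \<in> Q \<Longrightarrow> \<bar>q y\<bar> \<le> B"
  shows "ereal (Gr q x) = Ge q x" "\<bar>Gr q x\<bar> \<le> B"
proof -
  have ne: "Tr q x \<noteq> {}" using Tr_ne[OF x L] .
  have up: "Ge q x \<le> ereal B" unfolding Ge_def
  proof (rule SUP_least)
    fix y assume "y \<in> Tr q x"
    then have "y \<in> Q" unfolding Tr_def by simp
    then have "q y \<le> B" using B[of y] by (simp add: abs_le_iff)
    then show "ereal (q y) \<le> ereal B" by simp
  qed
  obtain y where y: "y \<in> Tr q x" using ne by blast
  then have "y \<in> Q" unfolding Tr_def by simp
  then have "- B \<le> q y" using B[of y] by (simp add: abs_le_iff)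
  then have "ereal (- B) \<le> ereal (q y)" by simp
  then have lo: "ereal (- B) \<le> Ge q x" unfolding Ge_def by (rule SUP_upper2[OF y])
  obtain r where r: "Ge q x = ereal r" using up lo by (cases "Ge q x") auto
  show "ereal (Gr q x) = Ge q x" using r unfolding Gr_def by simp
  have "r \<le> B" "- B \<le> r" using r up lo by simp_all
  then show "\<bar>Gr q x\<bar> \<le> B" using r unfolding Gr_def by (simp add: abs_le_iff)
qed

lemma Gr_closed:
  assumes L: "Lq q" and B: "\<And>y. y \<in> Q \<Longrightarrow> \<bar>q y\<bar> \<le> B"
  shows "closed {x\<in>Q. a \<le> Gr q x}"
  unfolding closed_sequential_limits
proof (intro allI impI, elim conjE)
  fix xs l assume xs: "\<forall>n. xs n \<in> {x \<in> Q. a \<le> Gr q x}" and l: "xs \<longlonglongrightarrow> l"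
  have xsQ: "\<forall>n. xs n \<in> Q" using xs by simp
  have lQ: "l \<in> Q" using compact_imp_closed[OF cQ, unfolded closed_sequential_limits, rule_format, OF conjI[OF xsQ l]] .
  have "\<exists>y\<in>Tr q (xs n). ereal (a - inverse (real (Suc n))) < ereal (q y)" for n
  proof -
    have xn: "xs n \<in> Q" "a \<le> Gr q (xs n)" using xs by auto
    have "0 < inverse (real (Suc n))" by simp
    then have "a - inverse (real (Suc n)) < Gr q (xs n)" using xn(2) by linarith
    then have "ereal (a - inverse (real (Suc n))) < ereal (Gr q (xs n))" by simp
    then have "ereal (a - inverse (real (Suc n))) < Ge q (xs n)"
      using Ge_bounds(1)[OF xn(1) L B] by simp
    then show ?thesis unfolding Ge_def less_SUP_iff .
  qed
  then have "\<forall>n. \<exists>y. y \<in> Tr q (xs n) \<and> a - inverse (real (Suc n)) < q y" by (simp add: Bex_def)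
  then obtain ys where ysP: "\<forall>n. ys n \<in> Tr q (xs n) \<and> a - inverse (real (Suc n)) < q (ys n)"
    by (rule choice[THEN exE])
  have ys: "\<And>n. ys n \<in> Tr q (xs n)" "\<And>n. a - inverse (real (Suc n)) < q (ys n)"
    using ysP by simp_all
  have "\<exists>y\<in>Q. (\<forall>z\<in>Q. c l y + q y \<le> c l z + q z) \<and> a \<le> q y"
  proof (rule key[of "\<lambda>n. q" q xs l ys a "\<lambda>n. inverse (real (Suc n))"])
    show "xs n \<in> Q" for n using xsQ by blast
    show "ys n \<in> Q" for n using ys(1)[of n] unfolding Tr_def by blast
    show "z \<in> Q \<Longrightarrow> c (xs n) (ys n) + q (ys n) \<le> c (xs n) z + q z" for n z using ys(1)[of n] unfolding Tr_def by blast
    show "a - inverse (real (Suc n)) \<le> q (ys n)" for n using ys(2)[of n] by simp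
    show "Lq q" by (rule L)
    show "(\<lambda>n. q z) \<longlonglongrightarrow> q z" for z by simp
    show "xs \<longlonglongrightarrow> l" by (rule l)
    show "l \<in> Q" by (rule lQ)
    show "(\<lambda>n. inverse (real (Suc n))) \<longlonglongrightarrow> 0" by (rule LIMSEQ_inverse_real_of_nat)
  qed
  then obtain y where y: "y \<in> Q" "\<forall>z\<in>Q. c l y + q y \<le> c l z + q z" "a \<le> q y" by blast
  have "y \<in> Tr q l" using y unfolding Tr_def by auto
  then have "ereal (q y) \<le> Ge q l" unfolding Ge_def by (rule SUP_upper)
  then have "ereal (q y) \<le> ereal (Gr q l)" using Ge_bounds(1)[OF lQ L B] by simp
  then have "q y \<le> Gr q l" by simp
  then show "l \<in> {x \<in> Q. a \<le> Gr q x}" using y lQ by auto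
qed

lemma Gr_meas:
  assumes L: "Lq q" and B: "\<And>y. y \<in> Q \<Longrightarrow> \<bar>q y\<bar> \<le> B"
    and sf: "sets f = sets (restrict_space borel Q)"
  shows "Gr q \<in> borel_measurable f"
proof -
  have sp: "space f = Q" using sets_eq_imp_space_eq[OF sf] by (simp add: space_restrict_space)
  show ?thesis unfolding borel_measurable_iff_ge
  proof
    fix a
    have "{x\<in>Q. a \<le> Gr q x} \<in> sets borel" using Gr_closed[OF L B] by (rule borel_closed)
    then have mem: "Q \<inter> {x\<in>Q. a \<le> Gr q x} \<in> sets (restrict_space borel Q)"
      unfolding sets_restrict_space by (rule imageI)
    have eq: "{w \<in> space f. a \<le> Gr q w} = Q \<inter> {x\<in>Q. a \<le> Gr q x}" unfolding sp by blast
    show "{w \<in> space f. a \<le> Gr q w} \<in> sets f" unfolding eq sf by (rule mem)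
  qed
qed

end

lemma EI_cong:
  assumes "\<And>x. x \<in> space f \<Longrightarrow> g1 x = g2 x"
  shows "ereal_integral f g1 = ereal_integral f g2"
proof -
  have "(\<integral>\<^sup>+ x. e2ennreal (g1 x) \<partial>f) = (\<integral>\<^sup>+ x. e2ennreal (g2 x) \<partial>f)"
    by (rule nn_integral_cong) (simp add: assms)
  moreover have "(\<integral>\<^sup>+ x. e2ennreal (- g1 x) \<partial>f) = (\<integral>\<^sup>+ x. e2ennreal (- g2 x) \<partial>f)"
    by (rule nn_integral_cong) (simp add: assms)
  ultimately show ?thesis unfolding ereal_integral_def by simp
qed

lemma EI_mono:
  assumes "\<And>x. x \<in> space f \<Longrightarrow> g1 x \<le> g2 x"
  shows "ereal_integral f g1 \<le> ereal_integral f g2"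
proof -
  have "(\<integral>\<^sup>+ x. e2ennreal (g1 x) \<partial>f) \<le> (\<integral>\<^sup>+ x. e2ennreal (g2 x) \<partial>f)"
    by (rule nn_integral_mono) (simp add: assms e2ennreal_mono)
  then have 1: "enn2ereal (\<integral>\<^sup>+ x. e2ennreal (g1 x) \<partial>f) \<le> enn2ereal (\<integral>\<^sup>+ x. e2ennreal (g2 x) \<partial>f)"
    by (simp add: less_eq_ennreal.rep_eq)
  have "(\<integral>\<^sup>+ x. e2ennreal (- g2 x) \<partial>f) \<le> (\<integral>\<^sup>+ x. e2ennreal (- g1 x) \<partial>f)"
    by (rule nn_integral_mono) (simp add: assms e2ennreal_mono)
  then have 2: "enn2ereal (\<integral>\<^sup>+ x. e2ennreal (- g2 x) \<partial>f) \<le> enn2ereal (\<integral>\<^sup>+ x. e2ennreal (- g1 x) \<partial>f)"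
    by (simp add: less_eq_ennreal.rep_eq)
  show ?thesis unfolding ereal_integral_def by (rule ereal_minus_mono[OF 1 2])
qed

lemma EI_nonpos:
  assumes "\<And>x. x \<in> space f \<Longrightarrow> g x \<le> 0"
  shows "ereal_integral f g \<le> 0"
proof -
  have "(\<integral>\<^sup>+ x. e2ennreal (g x) \<partial>f) = (\<integral>\<^sup>+ x. 0 \<partial>f)"
    by (rule nn_integral_cong) (simp add: assms e2ennreal_neg)
  then have "(\<integral>\<^sup>+ x. e2ennreal (g x) \<partial>f) = 0" by simp
  moreover have "enn2ereal 0 - enn2ereal (\<integral>\<^sup>+ x. e2ennreal (- g x) \<partial>f) \<le> enn2ereal 0 - 0"
    by (rule ereal_minus_mono) simp_all
  ultimately show ?thesis unfolding ereal_integral_def by (simp add: zero_ennreal.rep_eq)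
qed

lemma enn2ereal_fin: "X \<noteq> \<infinity> \<Longrightarrow> enn2ereal X = ereal (enn2real X)"
  by (cases X rule: ennreal_cases) auto

lemma EI_real:
  assumes fm: "finite_measure f" and g: "g \<in> borel_measurable f"
    and B: "\<And>x. x \<in> space f \<Longrightarrow> \<bar>g x\<bar> \<le> B"
  shows "ereal_integral f (\<lambda>x. ereal (g x)) = ereal (integral\<^sup>L f g)"
proof -
  have int: "integrable f g"
    by (rule finite_measure.integrable_const_bound[OF fm, where B=B]) (auto simp: B g)
  have e1: "(\<integral>\<^sup>+ x. e2ennreal (ereal (g x)) \<partial>f) = (\<integral>\<^sup>+ x. ennreal (g x) \<partial>f)" by simp
  have e2: "(\<integral>\<^sup>+ x. e2ennreal (- ereal (g x)) \<partial>f) = (\<integral>\<^sup>+ x. ennreal (- g x) \<partial>f)" by simp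
  have f1: "(\<integral>\<^sup>+ x. ennreal (g x) \<partial>f) \<noteq> \<infinity>" and f2: "(\<integral>\<^sup>+ x. ennreal (- g x) \<partial>f) \<noteq> \<infinity>"
    using integrableD[OF int] by auto
  show ?thesis
    unfolding ereal_integral_def e1 e2 real_lebesgue_integral_def[OF int] enn2ereal_fin[OF f1] enn2ereal_fin[OF f2]
    by simp
qed

context mk begin

lemma lsc_bdd_below:
  assumes lsc: "lsc_on Q p" and pnm: "\<forall>y\<in>Q. p y \<noteq> -\<infinity>"
  shows "\<exists>m. \<forall>y\<in>Q. ereal m \<le> p y"
proof -
  have "\<forall>x\<in>Q. \<exists>t. ereal t < p x"
  proof
    fix x assume x: "x \<in> Q"
    show "\<exists>t. ereal t < p x"
    proof (cases "p x")
      case (real r) then show ?thesis by (intro exI[of _ "r - 1"]) simp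
    next
      case PInf then show ?thesis by (intro exI[of _ 0]) simp
    next
      case MInf then show ?thesis using pnm x by simp
    qed
  qed
  then obtain T where T: "\<forall>x\<in>Q. ereal (T x) < p x" by (rule bchoice[THEN exE])
  have "\<forall>x\<in>Q. \<exists>e>0. \<forall>y\<in>Q. dist y x < e \<longrightarrow> ereal (T x) < p y"
    using T lsc unfolding lsc_on_def by simp
  then obtain E where E: "\<forall>x\<in>Q. E x > 0 \<and> (\<forall>y\<in>Q. dist y x < E x \<longrightarrow> ereal (T x) < p y)"
    by (rule bchoice[THEN exE])
  obtain K where K: "K \<subseteq> Q" "finite K" "Q \<subseteq> (\<Union>x\<in>K. ball x (E x))"
  proof (rule compactE_image[OF cQ, of Q "\<lambda>x. ball x (E x)"])
    show "Q \<subseteq> (\<Union>x\<in>Q. ball x (E x))"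
    proof
      fix y assume y: "y \<in> Q"
      then have "y \<in> ball y (E y)" using E by simp
      then show "y \<in> (\<Union>x\<in>Q. ball x (E x))" using y by (rule UN_I[rotated])
    qed
  qed auto
  have Kne: "K \<noteq> {}" using K(3) ne by auto
  show ?thesis
  proof (intro exI[of _ "Min (T ` K)"] ballI)
    fix y assume y: "y \<in> Q"
    then obtain x where x: "x \<in> K" "y \<in> ball x (E x)" using K(3) by blast
    have xQ: "x \<in> Q" using x K by blast
    have "dist y x < E x" using x(2) by (simp add: dist_commute)
    then have "ereal (T x) < p y" using E xQ y by blast
    moreover have "Min (T ` K) \<le> T x" using K(2) x(1) by simp
    ultimately show "ereal (Min (T ` K)) \<le> p y" by (metis ereal_less_eq(3) less_imp_le order_trans)
  qed
qed

end

context mk begin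

lemma improve:
  assumes lsc: "lsc_on Q p" and pnm: "\<forall>y\<in>Q. p y \<noteq> -\<infinity>"
    and x0: "x0 \<in> Q" "p x0 \<le> ereal K0"
    and M: "\<forall>x\<in>Q. \<forall>y\<in>Q. c x y \<le> M"
  shows "\<exists>q. (\<forall>y\<in>Q. ereal (q y) \<le> p y) \<and> Lq q \<and> (\<forall>y\<in>Q. q y \<le> M + K0)
           \<and> (\<forall>y\<in>Q. \<forall>y'\<in>Q. q y' \<le> q y + M)
           \<and> (\<forall>x\<in>Q. (SUP y\<in>Tset Q c p x. p y) \<le> Ge q x)"
proof -
  obtain m where m: "\<forall>y\<in>Q. ereal m \<le> p y" using lsc_bdd_below[OF lsc pnm] by blast
  define v where "v x = vfun Q c p x" for x
  have vlo: "ereal m \<le> v x" if x: "x \<in> Q" for x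
    unfolding v_def vfun_def
  proof (rule INF_greatest)
    fix y assume y: "y \<in> Q"
    have "ereal 0 + ereal m \<le> ereal (c x y) + p y"
      by (rule add_mono) (simp_all add: cnn x y m)
    then show "ereal m \<le> ereal (c x y) + p y" by simp
  qed
  have vup: "v x \<le> ereal (M + K0)" if x: "x \<in> Q" for x
    unfolding v_def vfun_def
  proof (rule INF_lower2[OF x0(1)])
    have "ereal (c x x0) + p x0 \<le> ereal M + ereal K0"
      by (rule add_mono) (simp_all add: M x x0)
    then show "ereal (c x x0) + p x0 \<le> ereal (M + K0)" by simp
  qed
  define vr where "vr x = real_of_ereal (v x)" for x
  have vr: "ereal (vr x) = v x" "m \<le> vr x" "vr x \<le> M + K0" if x: "x \<in> Q" for x
  proof -
    obtain r where r: "v x = ereal r" using vlo[OF x] vup[OF x] by (cases "v x") auto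
    show "ereal (vr x) = v x" "m \<le> vr x" "vr x \<le> M + K0"
      using r vlo[OF x] vup[OF x] unfolding vr_def by simp_all
  qed
  have vle: "ereal (vr x) \<le> ereal (c x y) + p y" if "x \<in> Q" "y \<in> Q" for x y
    using vr(1)[OF that(1)] unfolding v_def vfun_def using INF_lower[OF that(2)] by simp
  define qr where "qr y = (SUP x\<in>Q. vr x - c x y)" for y
  have bdd: "bdd_above ((\<lambda>x. vr x - c x y) ` Q)" if y: "y \<in> Q" for y
  proof (rule bdd_aboveI2)
    fix x assume x: "x \<in> Q"
    show "vr x - c x y \<le> M + K0" using vr(3)[OF x] cnn x y by force
  qed
  have b: "vr x \<le> c x y + qr y" if x: "x \<in> Q" and y: "y \<in> Q" for x y
  proof -
    have "vr x - c x y \<le> qr y" unfolding qr_def by (rule cSUP_upper[OF x bdd[OF y]])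
    then show ?thesis by simp
  qed
  have a: "ereal (qr y) \<le> p y" if y: "y \<in> Q" for y
  proof (cases "p y")
    case (real r)
    have "qr y \<le> r" unfolding qr_def
    proof (rule cSUP_least[OF ne])
      fix x assume x: "x \<in> Q"
      have "ereal (vr x) \<le> ereal (c x y) + ereal r" using vle[OF x y] real by simp
      then show "vr x - c x y \<le> r" by simp
    qed
    then show ?thesis using real by simp
  next
    case PInf then show ?thesis by simp
  next
    case MInf then show ?thesis using pnm y by simp
  qed
  have L: "Lq qr" unfolding Lq_def
  proof (intro allI impI ballI)
    fix e :: real and y y' assume e: "e > 0" and y: "y \<in> Q" and y': "y' \<in> Q"
      and h: "\<forall>x\<in>Q. \<bar>c x y - c x y'\<bar> < e"
    have 1: "qr y \<le> qr y' + e" unfolding qr_def[of y]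
    proof (rule cSUP_least[OF ne])
      fix x assume x: "x \<in> Q"
      have "vr x - c x y \<le> vr x - c x y' + e" using h[rule_format, OF x] unfolding abs_less_iff by linarith
      also have "\<dots> \<le> qr y' + e" using b[OF x y'] by simp
      finally show "vr x - c x y \<le> qr y' + e" .
    qed
    have 2: "qr y' \<le> qr y + e" unfolding qr_def[of y']
    proof (rule cSUP_least[OF ne])
      fix x assume x: "x \<in> Q"
      have "vr x - c x y' \<le> vr x - c x y + e" using h[rule_format, OF x] unfolding abs_less_iff by linarith
      also have "\<dots> \<le> qr y + e" using b[OF x y] by simp
      finally show "vr x - c x y' \<le> qr y + e" .
    qed
    show "\<bar>qr y - qr y'\<bar> \<le> e" using 1 2 by (simp add: abs_le_iff)
  qed
  have up: "qr y \<le> M + K0" if y: "y \<in> Q" for y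
    unfolding qr_def
  proof (rule cSUP_least[OF ne])
    fix x assume x: "x \<in> Q"
    show "vr x - c x y \<le> M + K0" using vr(3)[OF x] cnn x y by force
  qed
  have osc: "qr y' \<le> qr y + M" if y: "y \<in> Q" and y': "y' \<in> Q" for y y'
    unfolding qr_def[of y']
  proof (rule cSUP_least[OF ne])
    fix x assume x: "x \<in> Q"
    have "vr x - c x y' \<le> vr x - c x y + M" using M cnn x y y' by force
    also have "\<dots> \<le> qr y + M" using b[OF x y] by simp
    finally show "vr x - c x y' \<le> qr y + M" .
  qed
  have G: "(SUP y\<in>Tset Q c p x. p y) \<le> Ge qr x" if x: "x \<in> Q" for x
  proof (rule SUP_least)
    fix y assume yT: "y \<in> Tset Q c p x"
    then have y: "y \<in> Q" and eq: "ereal (c x y) + p y = v x" unfolding Tset_def v_def by auto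
    have eq2: "ereal (c x y) + p y = ereal (vr x)" using eq vr(1)[OF x] by simp
    obtain r where r: "p y = ereal r"
    proof (cases "p y")
      case (real r) then show ?thesis using that by simp
    next
      case PInf then show ?thesis using eq2 by simp
    next
      case MInf then show ?thesis using pnm y by simp
    qed
    have r2: "r = vr x - c x y" using eq2 r by simp
    have "qr y \<le> r" using a[OF y] r by simp
    moreover have "r \<le> qr y" using b[OF x y] r2 by simp
    ultimately have qy: "qr y = r" by simp
    have "y \<in> Tr qr x" unfolding Tr_def
    proof (intro CollectI conjI ballI)
      show "y \<in> Q" by (rule y)
      fix z assume z: "z \<in> Q"
      show "c x y + qr y \<le> c x z + qr z" using b[OF x z] qy r2 by simp
    qed
    then have "ereal (qr y) \<le> Ge qr x" unfolding Ge_def by (rule SUP_upper)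
    then show "p y \<le> Ge qr x" using r qy by simp
  qed
  show ?thesis
    by (rule exI[of _ qr]) (simp add: a L up osc G)
qed

end

context mk begin

lemma Gr_upper:
  assumes x: "x \<in> Q" and L: "Lq q" and B: "\<And>y. y \<in> Q \<Longrightarrow> \<bar>q y\<bar> \<le> B" and y: "y \<in> Tr q x"
  shows "q y \<le> Gr q x"
proof -
  have "ereal (q y) \<le> Ge q x" unfolding Ge_def using y by (rule SUP_upper)
  then have "ereal (q y) \<le> ereal (Gr q x)" using Ge_bounds(1)[OF x L B] by simp
  then show ?thesis by simp
qed

lemma limsup_pt:
  assumes L: "\<And>n. Lq (qs n)" and B: "\<And>n y. y \<in> Q \<Longrightarrow> \<bar>qs n y\<bar> \<le> B"
    and qc: "\<And>z. z \<in> Q \<Longrightarrow> (\<lambda>n. qs n z) \<longlonglongrightarrow> q z"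
    and Lqq: "Lq q" and Bq: "\<And>y. y \<in> Q \<Longrightarrow> \<bar>q y\<bar> \<le> B" and x: "x \<in> Q"
  shows "(\<lambda>n. max (Gr (qs n) x) (Gr q x)) \<longlonglongrightarrow> Gr q x"
  unfolding tendsto_iff
proof (intro allI impI, rule ccontr)
  fix e :: real assume e: "e > 0"
  let ?P = "\<lambda>n. dist (max (Gr (qs n) x) (Gr q x)) (Gr q x) < e"
  assume "\<not> eventually ?P sequentially"
  then have "frequently (\<lambda>n. \<not> ?P n) sequentially" by (simp add: not_eventually)
  then have "\<forall>N. \<exists>n\<ge>N. \<not> ?P n" unfolding frequently_sequentially .
  then have "infinite {n. \<not> ?P n}" unfolding infinite_nat_iff_unbounded_le by simp
  then obtain r :: "nat \<Rightarrow> nat" where r: "strict_mono r" and rP: "\<And>n. \<not> ?P (r n)"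
    using infinite_enumerate by blast
  have big: "Gr q x + e \<le> Gr (qs (r n)) x" for n
  proof -
    have "e \<le> dist (max (Gr (qs (r n)) x) (Gr q x)) (Gr q x)" using rP[of n] by simp
    then show ?thesis using e unfolding dist_real_def by (cases "Gr (qs (r n)) x \<le> Gr q x") simp_all
  qed
  have "\<exists>y. y \<in> Tr (qs (r n)) x \<and> Gr q x + e/2 < qs (r n) y" for n
  proof -
    have "Gr q x + e/2 < Gr (qs (r n)) x" using big[of n] e by linarith
    then have "ereal (Gr q x + e/2) < ereal (Gr (qs (r n)) x)" by simp
    then have "ereal (Gr q x + e/2) < Ge (qs (r n)) x" using Ge_bounds(1)[OF x L B] by simp
    then have "\<exists>y\<in>Tr (qs (r n)) x. ereal (Gr q x + e/2) < ereal (qs (r n) y)"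
      unfolding Ge_def less_SUP_iff .
    then show ?thesis by (simp add: Bex_def)
  qed
  then have "\<forall>n. \<exists>y. y \<in> Tr (qs (r n)) x \<and> Gr q x + e/2 < qs (r n) y" by blast
  then obtain ys where ysP: "\<forall>n. ys n \<in> Tr (qs (r n)) x \<and> Gr q x + e/2 < qs (r n) (ys n)"
    by (rule choice[THEN exE])
  have ys: "\<And>n. ys n \<in> Tr (qs (r n)) x" "\<And>n. Gr q x + e/2 < qs (r n) (ys n)"
    using ysP by simp_all
  have "\<exists>y\<in>Q. (\<forall>z\<in>Q. c x y + q y \<le> c x z + q z) \<and> Gr q x + e/2 \<le> q y"
  proof (rule key[of "\<lambda>n. qs (r n)" q "\<lambda>n. x" x ys "Gr q x + e/2" "\<lambda>n. 0"])
    show "Lq (qs (r n))" for n by (rule L)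
    show "(\<lambda>n. qs (r n) z) \<longlonglongrightarrow> q z" if "z \<in> Q" for z
      using LIMSEQ_subseq_LIMSEQ[OF qc[OF that] r] by (simp add: o_def)
    show "x \<in> Q" for n :: nat by (rule x)
    show "(\<lambda>n. x) \<longlonglongrightarrow> x" by simp
    show "x \<in> Q" by (rule x)
    show "ys n \<in> Q" for n using ys(1)[of n] unfolding Tr_def by blast
    show "z \<in> Q \<Longrightarrow> c x (ys n) + qs (r n) (ys n) \<le> c x z + qs (r n) z" for n z
      using ys(1)[of n] unfolding Tr_def by blast
    show "Gr q x + e/2 - 0 \<le> qs (r n) (ys n)" for n using ys(2)[of n] by simp
    show "(\<lambda>n. 0::real) \<longlonglongrightarrow> 0" by simp
  qed
  then obtain y where y: "y \<in> Q" "\<forall>z\<in>Q. c x y + q y \<le> c x z + q z" "Gr q x + e/2 \<le> q y" by blast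
  have "y \<in> Tr q x" using y unfolding Tr_def by blast
  then have "q y \<le> Gr q x" using Gr_upper[OF x Lqq Bq] by blast
  then show False using y(3) e by linarith
qed

end

theorem mainTheorem3:
  fixes Q :: "'a::metric_space set"
    and p0 :: "'a \<Rightarrow> ereal"
    and c :: "'a \<Rightarrow> 'a \<Rightarrow> real"
    and f :: "'a measure"
  assumes "compact Q"
    and "\<forall>x\<in>Q. 0 \<le> p0 x"
    and "\<exists>x\<in>Q. p0 x \<noteq> \<infinity>"
    and "continuous_on (Q \<times> Q) (\<lambda>(x, y). c x y)"
    and "\<forall>x\<in>Q. \<forall>y\<in>Q. 0 \<le> c x y"
    and "\<forall>x\<in>Q. c x x = 0"
    and "sets f = sets (restrict_space borel Q)"
    and "emeasure f Q < \<infinity>"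
  shows "\<exists>popt\<in>admissible Q p0. \<forall>p\<in>admissible Q p0. Ffun Q c f p \<le> Ffun Q c f popt"
proof -
  note p0nn = assms(2) and sf = assms(7)
  obtain x0 where x0: "x0 \<in> Q" "p0 x0 \<noteq> \<infinity>" using assms(3) by blast
  have ne: "Q \<noteq> {}" using x0 by blast
  interpret mk Q c
    by (unfold_locales) (simp_all add: assms ne)
  have sp: "space f = Q" using sets_eq_imp_space_eq[OF sf] by (simp add: space_restrict_space)
  have fm: "finite_measure f" by (rule finite_measureI) (use assms(8) sp in simp)
  define K0 where "K0 = real_of_ereal (p0 x0)"
  have K0: "p0 x0 = ereal K0" "0 \<le> K0"
  proof -
    obtain r where r: "p0 x0 = ereal r" using x0(2) p0nn x0(1) by (cases "p0 x0") auto
    have "0 \<le> r" using r p0nn x0(1) by fastforce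
    then show "p0 x0 = ereal K0" "0 \<le> K0" using r unfolding K0_def by simp_all
  qed
  have "\<exists>z\<in>Q \<times> Q. \<forall>w\<in>Q \<times> Q. (\<lambda>(x, y). c x y) w \<le> (\<lambda>(x, y). c x y) z"
    by (rule continuous_attains_sup[OF compact_Times[OF cQ cQ] _ cont]) (simp add: ne)
  then obtain z where z: "z \<in> Q \<times> Q" "\<forall>w\<in>Q \<times> Q. (\<lambda>(x, y). c x y) w \<le> (\<lambda>(x, y). c x y) z"
    by (elim bexE) (rule that)
  define M where "M = (\<lambda>(x, y). c x y) z"
  have M: "\<forall>x\<in>Q. \<forall>y\<in>Q. c x y \<le> M"
  proof (intro ballI)
    fix x y assume "x \<in> Q" "y \<in> Q"
    then have "(x, y) \<in> Q \<times> Q" by simp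
    then have "(\<lambda>(x, y). c x y) (x, y) \<le> (\<lambda>(x, y). c x y) z" by (rule bspec[OF z(2)])
    then show "c x y \<le> M" unfolding M_def by simp
  qed
  have M0: "0 \<le> M"
  proof -
    have "c x0 x0 \<le> M" using M x0(1) by blast
    then show ?thesis using cdiag x0(1) by simp
  qed
  define B where "B = M + K0"
  let ?A = "admissible Q p0"
  let ?F = "Ffun Q c f"
  have FR: "?F (\<lambda>y. ereal (q y)) = ereal (integral\<^sup>L f (Gr q))"
    if L: "Lq q" and Bq: "\<And>y. y \<in> Q \<Longrightarrow> \<bar>q y\<bar> \<le> B" for q
  proof -
    have "?F (\<lambda>y. ereal (q y)) = ereal_integral f (\<lambda>x. ereal (Gr q x))"
      unfolding Ffun_def
    proof (rule EI_cong)
      fix x assume "x \<in> space f"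
      then have x: "x \<in> Q" using sp by simp
      show "(SUP y\<in>Tset Q c (\<lambda>y. ereal (q y)) x. ereal (q y)) = ereal (Gr q x)"
        unfolding Tset_eq Ge_def[symmetric] using Ge_bounds(1)[OF x L Bq] by simp
    qed
    also have "\<dots> = ereal (integral\<^sup>L f (Gr q))"
    proof (rule EI_real[OF fm])
      show "Gr q \<in> borel_measurable f" by (rule Gr_meas[OF L Bq sf])
      show "\<bar>Gr q x\<bar> \<le> B" if "x \<in> space f" for x
        using Ge_bounds(2)[OF _ L Bq] that sp by simp
    qed
    finally show ?thesis .
  qed
  have L0: "Lq (\<lambda>y. 0)" unfolding Lq_def by simp
  have B0: "\<bar>(0::real)\<bar> \<le> B" unfolding B_def using M0 K0 by simp
  have F0: "?F (\<lambda>y. ereal 0) = 0"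
  proof -
    have "Gr (\<lambda>y. 0) x = 0" if x: "x \<in> Q" for x
      unfolding Gr_def Ge_def using Tr_ne[OF x L0] by simp
    then have "integral\<^sup>L f (Gr (\<lambda>y. 0)) = integral\<^sup>L f (\<lambda>x. 0)"
      by (intro Bochner_Integration.integral_cong) (simp_all add: sp)
    then show ?thesis using FR[OF L0] B0 by simp
  qed
  have zeroA: "(\<lambda>y. ereal 0) \<in> ?A"
    unfolding admissible_def lsc_on_def
  proof (intro CollectI conjI ballI allI impI)
    fix x assume "x \<in> Q"
    then show "ereal 0 \<le> p0 x" using p0nn by (simp add: zero_ereal_def[symmetric])
  next
    fix x and t :: ereal assume "x \<in> Q" "t < ereal 0"
    then show "\<exists>e>0. \<forall>y\<in>Q. dist y x < e \<longrightarrow> t < ereal 0" by (intro exI[of _ 1]) simp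
  qed
  have impr: "\<exists>q. (\<forall>y\<in>Q. ereal (q y) \<le> p0 y) \<and> Lq q \<and> (\<forall>y\<in>Q. \<bar>q y\<bar> \<le> B)
               \<and> ?F p \<le> ?F (\<lambda>y. ereal (q y))" if pA: "p \<in> ?A" for p
  proof (cases "?F p \<le> 0")
    case True
    then show ?thesis using F0 p0nn L0 B0 by (intro exI[of _ "\<lambda>y. 0"]) (simp add: zero_ereal_def[symmetric])
  next
    case False
    then have Fpos: "0 < ?F p" by simp
    have ple: "\<forall>y\<in>Q. p y \<le> p0 y" and lsc: "lsc_on Q p" using pA unfolding admissible_def by auto
    have pnm: "\<forall>y\<in>Q. p y \<noteq> -\<infinity>"
    proof (rule ccontr)
      assume "\<not> (\<forall>y\<in>Q. p y \<noteq> -\<infinity>)"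
      then obtain y0 where y0: "y0 \<in> Q" "p y0 = -\<infinity>" by blast
      have "?F p \<le> 0" unfolding Ffun_def
      proof (rule EI_nonpos)
        fix x assume "x \<in> space f"
        show "(SUP y\<in>Tset Q c p x. p y) \<le> 0"
        proof (rule SUP_least)
          fix y assume "y \<in> Tset Q c p x"
          then have "ereal (c x y) + p y = vfun Q c p x" unfolding Tset_def by simp
          also have "\<dots> \<le> ereal (c x y0) + p y0" unfolding vfun_def by (rule INF_lower[OF y0(1)])
          finally have "ereal (c x y) + p y = -\<infinity>" using y0(2) by simp
          then have "p y = -\<infinity>" by (cases "p y") simp_all
          then show "p y \<le> 0" by simp
        qed
      qed
      then show False using Fpos by simp
    qed
    have "p x0 \<le> p0 x0" using ple x0(1) by blast
    then have px0: "p x0 \<le> ereal K0" using K0(1) by simp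
    obtain q where q: "\<forall>y\<in>Q. ereal (q y) \<le> p y" "Lq q" "\<forall>y\<in>Q. q y \<le> M + K0"
        "\<forall>y\<in>Q. \<forall>y'\<in>Q. q y' \<le> q y + M" "\<forall>x\<in>Q. (SUP y\<in>Tset Q c p x. p y) \<le> Ge q x"
      using improve[OF lsc pnm x0(1) px0 M] by blast
    have Fle: "?F p \<le> ?F (\<lambda>y. ereal (q y))" unfolding Ffun_def
    proof (rule EI_mono)
      fix x assume "x \<in> space f"
      then have x: "x \<in> Q" using sp by simp
      show "(SUP y\<in>Tset Q c p x. p y) \<le> (SUP y\<in>Tset Q c (\<lambda>y. ereal (q y)) x. ereal (q y))"
        unfolding Tset_eq Ge_def[symmetric] using q(5) x by simp
    qed
    have "\<exists>y0\<in>Q. 0 \<le> q y0"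
    proof (rule ccontr)
      assume "\<not> (\<exists>y0\<in>Q. 0 \<le> q y0)"
      then have neg: "\<forall>y\<in>Q. q y < 0" by auto
      have "?F (\<lambda>y. ereal (q y)) \<le> 0" unfolding Ffun_def
      proof (rule EI_nonpos)
        fix x assume "x \<in> space f"
        show "(SUP y\<in>Tset Q c (\<lambda>y. ereal (q y)) x. ereal (q y)) \<le> 0"
        proof (rule SUP_least)
          fix y assume "y \<in> Tset Q c (\<lambda>y. ereal (q y)) x"
          then have "y \<in> Q" unfolding Tset_def by simp
          then show "ereal (q y) \<le> 0" using neg by (simp add: less_imp_le)
        qed
      qed
      then show False using Fpos Fle by simp
    qed
    then obtain y0 where y0: "y0 \<in> Q" "0 \<le> q y0" by blast
    have qB: "\<bar>q y\<bar> \<le> B" if y: "y \<in> Q" for y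
    proof -
      have "q y0 \<le> q y + M" using q(4) y y0(1) by blast
      then have "- B \<le> q y" using y0(2) K0(2) unfolding B_def by linarith
      moreover have "q y \<le> B" using q(3) y unfolding B_def by blast
      ultimately show ?thesis by (simp add: abs_le_iff)
    qed
    have "\<forall>y\<in>Q. ereal (q y) \<le> p0 y" using q(1) ple by (meson order_trans)
    then show ?thesis using q(2) qB Fle by (intro exI[of _ q]) simp
  qed
  have "\<exists>u::nat\<Rightarrow>ereal. incseq u \<and> range u \<subseteq> ?F ` ?A \<and> Sup (?F ` ?A) = (SUP i. u i)"
    by (rule Sup_countable_SUP) (use zeroA in blast)
  then obtain u :: "nat \<Rightarrow> ereal" where u: "incseq u" "range u \<subseteq> ?F ` ?A" "Sup (?F ` ?A) = (SUP i. u i)"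
    by (elim exE conjE) (rule that)
  have "\<forall>n. \<exists>q. (\<forall>y\<in>Q. ereal (q y) \<le> p0 y) \<and> Lq q \<and> (\<forall>y\<in>Q. \<bar>q y\<bar> \<le> B)
               \<and> u n \<le> ?F (\<lambda>y. ereal (q y))"
  proof
    fix n
    have "u n \<in> ?F ` ?A" using u(2) by blast
    then obtain p where p: "p \<in> ?A" "u n = ?F p" by (elim imageE) (rule that)
    show "\<exists>q. (\<forall>y\<in>Q. ereal (q y) \<le> p0 y) \<and> Lq q \<and> (\<forall>y\<in>Q. \<bar>q y\<bar> \<le> B)
               \<and> u n \<le> ?F (\<lambda>y. ereal (q y))"
      unfolding p(2) by (rule impr[OF p(1)])
  qed
  then obtain qs where qsP: "\<forall>n. (\<forall>y\<in>Q. ereal (qs n y) \<le> p0 y) \<and> Lq (qs n) \<and> (\<forall>y\<in>Q. \<bar>qs n y\<bar> \<le> B)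
               \<and> u n \<le> ?F (\<lambda>y. ereal (qs n y))"
    by (rule choice[THEN exE])
  have qs_p0: "\<And>n y. y \<in> Q \<Longrightarrow> ereal (qs n y) \<le> p0 y" and qsL: "\<And>n. Lq (qs n)"
    and qsB: "\<And>n y. y \<in> Q \<Longrightarrow> \<bar>qs n y\<bar> \<le> B" and qsF: "\<And>n. u n \<le> ?F (\<lambda>y. ereal (qs n y))"
    using qsP by simp_all
  obtain k where k: "strict_mono (k::nat\<Rightarrow>nat)" and kc: "\<And>y. y \<in> Q \<Longrightarrow> convergent (\<lambda>n. qs (k n) y)"
    using AA[of qs B, OF qsL qsB] by blast
  define q where "q y = lim (\<lambda>n. qs (k n) y)" for y
  have qc: "(\<lambda>n. qs (k n) y) \<longlonglongrightarrow> q y" if "y \<in> Q" for y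
    unfolding q_def using kc[OF that] by (simp add: convergent_LIMSEQ_iff)
  have Lqq: "Lq q" unfolding Lq_def
  proof (intro allI impI ballI)
    fix e :: real and y y' assume e: "e > 0" and y: "y \<in> Q" and y': "y' \<in> Q"
      and h: "\<forall>x\<in>Q. \<bar>c x y - c x y'\<bar> < e"
    have "\<bar>qs (k n) y - qs (k n) y'\<bar> \<le> e" for n using qsL[of "k n"] e y y' h unfolding Lq_def by blast
    then show "\<bar>q y - q y'\<bar> \<le> e"
      by (intro tendsto_le[OF trivial_limit_sequentially tendsto_const tendsto_rabs[OF tendsto_diff[OF qc[OF y] qc[OF y']]]])
         simp
  qed
  have Bq: "\<bar>q y\<bar> \<le> B" if y: "y \<in> Q" for y
    by (rule tendsto_le[OF trivial_limit_sequentially tendsto_const tendsto_rabs[OF qc[OF y]]]) (simp add: qsB y)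
  have qp0: "ereal (q y) \<le> p0 y" if y: "y \<in> Q" for y
  proof (cases "p0 y")
    case (real r)
    have "qs (k n) y \<le> r" for n using qs_p0[OF y, of "k n"] real by simp
    then have "q y \<le> r" by (intro tendsto_le[OF trivial_limit_sequentially tendsto_const qc[OF y]]) simp
    then show ?thesis using real by simp
  next
    case PInf then show ?thesis by simp
  next
    case MInf then show ?thesis using p0nn y by simp
  qed
  have poptA: "(\<lambda>y. ereal (q y)) \<in> ?A"
    unfolding admissible_def lsc_on_def
  proof (intro CollectI conjI ballI allI impI)
    fix x assume "x \<in> Q" then show "ereal (q x) \<le> p0 x" by (rule qp0)
  next
    fix x and t :: ereal assume x: "x \<in> Q" and t: "t < ereal (q x)"
    show "\<exists>e>0. \<forall>y\<in>Q. dist y x < e \<longrightarrow> t < ereal (q y)"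
    proof (cases t)
      case (real r)
      then have rq: "0 < q x - r" using t by simp
      obtain d where d: "d > 0" "\<forall>y\<in>Q. dist y x < d \<longrightarrow> dist (q y) (q x) < q x - r"
        using Lq_cont[OF Lqq, unfolded continuous_on_iff, rule_format, OF x rq] by blast
      show ?thesis
      proof (intro exI[of _ d] conjI ballI impI)
        fix y assume "y \<in> Q" "dist y x < d"
        then have "dist (q y) (q x) < q x - r" using d(2) by blast
        then have "r < q y" unfolding dist_real_def abs_less_iff by linarith
        then show "t < ereal (q y)" using real by simp
      qed (rule d(1))
    next
      case PInf then show ?thesis using t by simp
    next
      case MInf then show ?thesis by (intro exI[of _ 1]) simp
    qed
  qed
  have int: "integrable f g" if "g \<in> borel_measurable f" "\<And>x. x \<in> space f \<Longrightarrow> \<bar>g x\<bar> \<le> B" for g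
    by (rule finite_measure.integrable_const_bound[OF fm, where B=B]) (auto simp: that)
  have measn: "Gr (qs (k n)) \<in> borel_measurable f" for n by (rule Gr_meas[OF qsL qsB sf])
  have meas: "Gr q \<in> borel_measurable f" by (rule Gr_meas[OF Lqq Bq sf])
  have bn: "\<bar>Gr (qs (k n)) x\<bar> \<le> B" if "x \<in> space f" for n x
    using Ge_bounds(2)[OF _ qsL qsB] that sp by simp
  have bq: "\<bar>Gr q x\<bar> \<le> B" if "x \<in> space f" for x
    using Ge_bounds(2)[OF _ Lqq Bq] that sp by simp
  have DC: "(\<lambda>n. integral\<^sup>L f (\<lambda>x. max (Gr (qs (k n)) x) (Gr q x))) \<longlonglongrightarrow> integral\<^sup>L f (Gr q)"
  proof (rule integral_dominated_convergence[where w="\<lambda>x. B"])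
    show "Gr q \<in> borel_measurable f" by (rule meas)
    show "(\<lambda>x. max (Gr (qs (k n)) x) (Gr q x)) \<in> borel_measurable f" for n
      using meas measn[of n] by (rule borel_measurable_max)
    show "integrable f (\<lambda>x. B)" by (rule finite_measure.integrable_const[OF fm])
    show "AE x in f. (\<lambda>n. max (Gr (qs (k n)) x) (Gr q x)) \<longlonglongrightarrow> Gr q x"
    proof (rule AE_I2)
      fix x assume "x \<in> space f"
      then have x: "x \<in> Q" using sp by simp
      show "(\<lambda>n. max (Gr (qs (k n)) x) (Gr q x)) \<longlonglongrightarrow> Gr q x"
        by (rule limsup_pt[where qs="\<lambda>n. qs (k n)" and B=B, OF qsL qsB qc Lqq Bq x])
    qed
    show "AE x in f. norm (max (Gr (qs (k n)) x) (Gr q x)) \<le> B" for n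
    proof (rule AE_I2)
      fix x assume x: "x \<in> space f"
      show "norm (max (Gr (qs (k n)) x) (Gr q x)) \<le> B"
        using bn[OF x, of n] bq[OF x] by (simp add: abs_le_iff max_def)
    qed
  qed
  have FRq: "?F (\<lambda>y. ereal (q y)) = ereal (integral\<^sup>L f (Gr q))" by (rule FR[OF Lqq Bq])
  have ule: "u N \<le> ?F (\<lambda>y. ereal (q y))" for N
    unfolding FRq
  proof (rule LIMSEQ_le_const)
    show "(\<lambda>n. ereal (integral\<^sup>L f (\<lambda>x. max (Gr (qs (k n)) x) (Gr q x)))) \<longlonglongrightarrow> ereal (integral\<^sup>L f (Gr q))"
      using DC by simp
    show "\<exists>M. \<forall>n\<ge>M. u N \<le> ereal (integral\<^sup>L f (\<lambda>x. max (Gr (qs (k n)) x) (Gr q x)))"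
    proof (intro exI[of _ N] allI impI)
      fix n assume n: "N \<le> n"
      have "N \<le> k n" using n seq_suble[OF k, of n] by simp
      then have "u N \<le> u (k n)" using u(1) by (rule incseqD[rotated])
      also have "\<dots> \<le> ?F (\<lambda>y. ereal (qs (k n) y))" by (rule qsF)
      also have "\<dots> = ereal (integral\<^sup>L f (Gr (qs (k n))))" by (rule FR[OF qsL qsB])
      also have "\<dots> \<le> ereal (integral\<^sup>L f (\<lambda>x. max (Gr (qs (k n)) x) (Gr q x)))"
      proof -
        have "integral\<^sup>L f (Gr (qs (k n))) \<le> integral\<^sup>L f (\<lambda>x. max (Gr (qs (k n)) x) (Gr q x))"
        proof (rule integral_mono)
          show "integrable f (Gr (qs (k n)))" by (rule int[OF measn bn])
          show "integrable f (\<lambda>x. max (Gr (qs (k n)) x) (Gr q x))"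
          proof (rule int)
            show "(\<lambda>x. max (Gr (qs (k n)) x) (Gr q x)) \<in> borel_measurable f"
              using meas measn[of n] by (rule borel_measurable_max)
            show "\<bar>max (Gr (qs (k n)) x) (Gr q x)\<bar> \<le> B" if x: "x \<in> space f" for x
              using bn[OF x, of n] bq[OF x] by (simp add: abs_le_iff max_def)
          qed
          show "Gr (qs (k n)) x \<le> max (Gr (qs (k n)) x) (Gr q x)" for x by simp
        qed
        then show ?thesis by simp
      qed
      finally show "u N \<le> ereal (integral\<^sup>L f (\<lambda>x. max (Gr (qs (k n)) x) (Gr q x)))" .
    qed
  qed
  show ?thesis
  proof (rule bexI[OF _ poptA], rule ballI)
    fix p assume p: "p \<in> ?A"
    have "?F p \<le> Sup (?F ` ?A)" using p by (rule SUP_upper)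
    also have "\<dots> = (SUP i. u i)" by (rule u(3))
    also have "\<dots> \<le> ?F (\<lambda>y. ereal (q y))" by (rule SUP_least) (rule ule)
    finally show "?F p \<le> ?F (\<lambda>y. ereal (q y))" .
  qed
qed

end
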